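(* There are infinitely many positive integers $N$ for which there are infinitely many pairs $(A,B)$ of antipalindromic numbers with $N=A/B$.
   Context: A positive integer $n$ is antipalindromic if its binary representation $w=w_1\cdots w_L$ (most significant digit first, no leading zeros) has even length $L$ and satisfies $w_i+w_{L+1-i}=1$ for all $i$. *)

theory Defs
  imports Main
begin

fun bin_lsb :: "nat \<Rightarrow> nat list" where
  "bin_lsb n = (if n = 0 then [] else n mod 2 # bin_lsb (n div 2))"

definition binary_digits :: "nat \<Rightarrow> nat list" where
  "binary_digits n = rev (bin_lsb n)"

definition antipalindromic :: "nat \<Rightarrow> bool" where
  "antipalindromic n \<longleftrightarrow> n > 0 \<and>
     (let w = binary_digits n; L = length w in
        even L \<and> (\<forall>i<L. w ! i + w ! (L - 1 - i) = 1))"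

end

theory Submission
  imports Defs
begin

fun bval :: "nat list \<Rightarrow> nat" where
  "bval [] = 0"
| "bval (b # bs) = b + 2 * bval bs"

definition cp :: "nat list \<Rightarrow> nat list" where
  "cp w = map (\<lambda>b. 1 - b) (rev w)"

lemma bval_append: "bval (x @ y) = bval x + 2 ^ length x * bval y"
  by (induction x) auto

lemma bval_pos: "w \<noteq> [] \<Longrightarrow> last w = 1 \<Longrightarrow> bval w > 0"
  by (induction w) (auto split: if_splits)

lemma bin_lsb_bval:
  "set w \<subseteq> {0,1} \<Longrightarrow> (w \<noteq> [] \<longrightarrow> last w = 1) \<Longrightarrow> bin_lsb (bval w) = w"
proof (induction w)
  case Nil
  then show ?case by (subst bin_lsb.simps) simp
next
  case (Cons b w)
  show ?case
  proof (cases "w = []")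
    case True
    then have "b = 1" using Cons by simp
    then show ?thesis using True
      by (subst bin_lsb.simps) (simp add: bin_lsb.simps)
  next
    case False
    then have "bval w > 0" using Cons bval_pos by simp
    moreover have "b \<le> 1" using Cons by auto
    ultimately have "bval (b # w) \<noteq> 0" "bval (b#w) mod 2 = b" "bval (b#w) div 2 = bval w"
      by auto
    then show ?thesis using Cons False
      by (subst bin_lsb.simps) simp
  qed
qed

lemma cp_append: "cp (x @ y) = cp y @ cp x"
  by (simp add: cp_def)

lemma cp_rev: "cp (rev w) = rev (cp w)"
  by (simp add: cp_def rev_map)

lemma cp_rep: "cp (replicate n b) = replicate n (1 - b)"
  by (simp add: cp_def)

lemma cp_pow: "cp (concat (replicate j z)) = concat (replicate j (cp z))"
proof (induction j)
  case 0
  then show ?case by (simp add: cp_def)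
next
  case (Suc j)
  have "cp (concat (replicate (Suc j) z)) = concat (replicate j (cp z)) @ cp z"
    using Suc by (simp add: cp_append)
  also have "\<dots> = concat (replicate j (cp z) @ [cp z])" by simp
  also have "\<dots> = concat (replicate (Suc j) (cp z))"
    by (simp only: replicate_append_same) simp
  finally show ?case .
qed

lemma bval_pow: "bval (concat (replicate j z)) = bval z * (\<Sum>i<j. 2 ^ (i * length z))"
proof (induction j)
  case 0
  then show ?case by simp
next
  case (Suc j)
  then show ?case
    by (simp add: bval_append sum.lessThan_Suc_shift sum_distrib_left power_add
        algebra_simps del: sum.lessThan_Suc)
qed

lemma bval_rep0: "bval (replicate n 0) = 0"
  by (induction n) auto

lemma bval_rep1: "bval (replicate n 1) + 1 = 2 ^ n"
  by (induction n) auto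

lemma ap_word:
  assumes bits: "set w \<subseteq> {0,1}" and c: "cp w = w" and ev: "even (length w)"
    and ne: "w \<noteq> []" and l: "last w = 1"
  shows "antipalindromic (bval w)"
proof -
  have bd: "binary_digits (bval w) = rev w"
    unfolding binary_digits_def using bin_lsb_bval[OF bits] ne l by simp
  define u where "u = rev w"
  have cu: "cp u = u" unfolding u_def cp_rev c ..
  have ub: "set u \<subseteq> {0,1}" using bits u_def by simp
  have lu: "length u = length w" by (simp add: u_def)
  have idx: "u ! i + u ! (length u - 1 - i) = 1" if "i < length u" for i
  proof -
    have "u ! i = cp u ! i" using cu by simp
    also have "\<dots> = 1 - rev u ! i" using that by (simp add: cp_def)
    also have "rev u ! i = u ! (length u - 1 - i)" using that by (simp add: rev_nth)
    finally have e: "u ! i = 1 - u ! (length u - 1 - i)" .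
    have "length u - 1 - i < length u" using that by simp
    then have "u ! (length u - 1 - i) \<in> set u" by (rule nth_mem)
    then have "u ! (length u - 1 - i) \<in> {0,1}" using ub by blast
    then show ?thesis using e by auto
  qed
  show ?thesis
    unfolding antipalindromic_def Let_def bd
    using bval_pos[OF ne l] ev idx u_def by simp
qed


definition zB :: "nat \<Rightarrow> nat list" where
  "zB m = replicate (m+2) 1 @ replicate (m+2) 0"
definition bw :: "nat \<Rightarrow> nat \<Rightarrow> nat list" where
  "bw m j = [0] @ concat (replicate j (zB m)) @ [1]"
definition zA :: "nat \<Rightarrow> nat list" where
  "zA m = [1] @ replicate m 0 @ [1,0] @ replicate m 1 @ [0]"
definition aw :: "nat \<Rightarrow> nat \<Rightarrow> nat list" where
  "aw m j = replicate (m+1) 0 @ concat (replicate j (zA m)) @ replicate (m+1) 1"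
definition Nf :: "nat \<Rightarrow> nat" where
  "Nf m = bval (replicate (m+1) 1) * 2 ^ m"

lemma cp_zB: "cp (zB m) = zB m"
  unfolding zB_def cp_append cp_rep by simp

lemma cp_zA: "cp (zA m) = zA m"
  by (simp add: zA_def cp_def)

lemma ap_bw: "antipalindromic (bval (bw m j))"
proof (rule ap_word)
  show "set (bw m j) \<subseteq> {0,1}" by (auto simp: bw_def zB_def)
  show "cp (bw m j) = bw m j" unfolding bw_def cp_append cp_pow cp_zB by (simp add: cp_def)
  show "even (length (bw m j))" by (simp add: bw_def zB_def length_concat sum_list_replicate)
  show "bw m j \<noteq> []" by (simp add: bw_def)
  show "last (bw m j) = 1" by (simp add: bw_def)
qed

lemma ap_aw: "antipalindromic (bval (aw m j))"
proof (rule ap_word)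
  show "set (aw m j) \<subseteq> {0,1}" by (auto simp: aw_def zA_def)
  show "cp (aw m j) = aw m j" unfolding aw_def cp_append cp_pow cp_zA cp_rep by simp
  show "even (length (aw m j))" by (simp add: aw_def zA_def length_concat sum_list_replicate)
  show "aw m j \<noteq> []" by (simp add: aw_def)
  show "last (aw m j) = 1" by (simp add: aw_def)
qed

lemma len_zA: "length (zA m) = 2*m+4" by (simp add: zA_def)
lemma len_zB: "length (zB m) = 2*m+4" by (simp add: zB_def)

lemma val_zB: "bval (zB m) = bval (replicate (m+2) 1)"
  by (simp add: zB_def bval_append bval_rep0)

lemma val_zA: "bval (zA m) = 1 + 2*2^m + 8*2^m * bval (replicate m 1)"
  by (simp add: zA_def bval_append bval_rep0 algebra_simps)

lemma key:
  fixes a w v1 v2 :: nat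
  assumes "w + 1 = 2*a" "v1 + 1 = 4*a" "v2 + 1 = a"
  shows "w * v1 = 1 + 2*a + 8*a*v2"
proof -
  have "int w = 2*int a - 1" "int v1 = 4*int a - 1" "int v2 = int a - 1"
    using assms by linarith+
  then have e: "int (w * v1) = (2*int a - 1)*(4*int a - 1)"
     "int (1 + 2*a + 8*a*v2) = 1 + 2 * int a + 8 * int a * (int a - 1)"
    by simp_all
  then have "int (w * v1) = int (1 + 2*a + 8*a*v2)"
    unfolding e by (simp add: algebra_simps)
  then show ?thesis by (simp only: of_nat_eq_iff)
qed

lemma val_rel: "bval (aw m j) = Nf m * bval (bw m j)"
proof -
  define R where "R = (\<Sum>i<j. 2 ^ (i * (2*m+4)) :: nat)"
  define T where "T = (2::nat) ^ (j * (2*m+4))"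
  define a where "a = (2::nat)^m"
  define w where "w = bval (replicate (m+1) 1)"
  define v1 where "v1 = bval (replicate (m+2) 1)"
  define v2 where "v2 = bval (replicate m 1)"
  have hw: "w + 1 = 2*a" unfolding w_def a_def using bval_rep1[of "m+1"] by simp
  have hv1: "v1 + 1 = 4*a" unfolding v1_def a_def using bval_rep1[of "m+2"] by simp
  have hv2: "v2 + 1 = a" unfolding v2_def a_def using bval_rep1[of "m"] by simp
  have B: "bval (bw m j) = 2 * (v1 * R + T)"
    by (simp add: bw_def bval_append bval_pow len_zB val_zB R_def T_def v1_def length_concat
        sum_list_replicate mult.commute)
  have zA': "bval (zA m) = 1 + 2*a + 8*a*v2"
    using val_zA[of m] by (simp add: a_def v2_def)
  have A: "bval (aw m j) = 2*a * ((1 + 2*a + 8*a*v2) * R + T * w)"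
    by (simp add: aw_def bval_append bval_pow len_zA zA' R_def T_def w_def length_concat
        sum_list_replicate bval_rep0 a_def mult.commute)
  have N: "Nf m = w * a" by (simp add: Nf_def w_def a_def)
  show ?thesis unfolding A B N key[OF hw hv1 hv2, symmetric]
    by (simp add: algebra_simps)
qed


lemma inj_bw: "inj (\<lambda>j. bval (bw m j))"
proof (rule injI)
  fix j j' assume h: "bval (bw m j) = bval (bw m j')"
  have "bin_lsb (bval (bw m j)) = bw m j" for j
    by (rule bin_lsb_bval) (auto simp: bw_def zB_def)
  then have "bw m j = bw m j'" using h by metis
  then have "length (bw m j) = length (bw m j')" by simp
  then have "j * (2*m+4) = j' * (2*m+4)" by (simp add: bw_def zB_def length_concat sum_list_replicate algebra_simps)
  then show "j = j'" by simp
qed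

lemma Nf_pos: "Nf m \<ge> 2^m"
proof -
  have "bval (replicate (m+1) 1) \<ge> 1" using bval_rep1[of "m+1"] by simp
  then show ?thesis unfolding Nf_def by simp
qed

lemma inner_infinite:
  "infinite {(A, B). (A::nat) > 0 \<and> (B::nat) > 0 \<and> antipalindromic A \<and> antipalindromic B \<and> A = Nf m * B}"
  (is "infinite ?S")
proof -
  let ?g = "\<lambda>j. (bval (aw m j), bval (bw m j))"
  have "inj ?g" using inj_bw by (auto simp: inj_def)
  then have "infinite (range ?g)" using finite_imageD infinite_UNIV_nat by blast
  moreover have "range ?g \<subseteq> ?S"
  proof
    fix p assume "p \<in> range ?g"
    then obtain j where p: "p = ?g j" by blast
    have "antipalindromic (bval (aw m j))" "antipalindromic (bval (bw m j))"
      using ap_aw ap_bw by blast+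
    then show "p \<in> ?S" using p val_rel[of m j] by (auto simp: antipalindromic_def)
  qed
  ultimately show ?thesis using finite_subset by blast
qed

theorem theorem20:
  shows "infinite {N :: nat. N > 0 \<and>
           infinite {(A, B). (A::nat) > 0 \<and> (B::nat) > 0 \<and> antipalindromic A \<and> antipalindromic B \<and> A = N * B}}"
proof -
  have "\<exists>n>m. n \<in> {N :: nat. N > 0 \<and>
           infinite {(A, B). (A::nat) > 0 \<and> (B::nat) > 0 \<and> antipalindromic A \<and> antipalindromic B \<and> A = N * B}}" for m
  proof (intro exI conjI)
    have "m < 2^m" by (rule less_exp)
    then show "m < Nf m" using Nf_pos[of m] by linarith
    then show "Nf m \<in> {N :: nat. N > 0 \<and>
           infinite {(A, B). (A::nat) > 0 \<and> (B::nat) > 0 \<and> antipalindromic A \<and> antipalindromic B \<and> A = N * B}}"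
      using inner_infinite[of m] by simp
  qed
  then show ?thesis unfolding finite_nat_set_iff_bounded by (meson less_asym)
qed

end
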